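(* Let $\mathcal{A}\subset\mathbb{Z}$ be a finite alphabet, let $G=(V,E)$ be a finite directed graph with edge labelling $\ell:E\to\mathcal{A}$, let $I\subseteq V$ be nonempty, assume $M=\sum_{a\in\mathcal{A}}M_a$ is primitive, let $\beta>1$ be a Pisot number, and let $\nu,\nu_I$ be as in the context. Define $W(t)=\lambda^{-1}\sum_{a\in\mathcal{A}}e^{-2\pi i a t}M_a$ for $t\in\mathbb{R}$. Then for all $t\in\mathbb{R}$, $$\widehat{\nu}(t)=\mathbf v_L^{\mathsf T}\prod_{n=1}^\infty W(\beta^{-n}t)\,\mathbf v_R\qquad\text{and}\qquad \widehat{\nu}_I(t)=\frac{1}{\mathbf v_I^{\mathsf T}\mathbf v_R}\mathbf v_I^{\mathsf T}\prod_{n=1}^\infty W(\beta^{-n}t)\,\mathbf v_R,$$ where the infinite matrix products are ordered from left to right, i.e. $\prod_{n=1}^\infty W(\beta^{-n}t)=\lim_{N\to\infty}W(\beta^{-1}t)W(\beta^{-2}t)\cdots W(\beta^{-N}t)$.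
   Context: For $a\in\mathcal{A}$, $M_a$ is the $V\times V$ matrix with $(M_a)_{ij}=1$ if $(i,j)\in E$ and $\ell((i,j))=a$, and $0$ otherwise. By Perron–Frobenius, $M$ has a dominant eigenvalue $\lambda>0$ with positive left eigenvector $\mathbf v_L$ and right eigenvector $\mathbf v_R$, normalised by $\mathbf v_L^{\mathsf T}\mathbf v_R=1$; $\mathbf v_I$ is the indicator vector of $I$. $\mathcal{K}^+\subseteq\mathcal{A}^{\mathbb{N}}$ is the set of sequences $(\ell(e_k))_{k\ge1}$ for infinite paths $e_1e_2\ldots$ in $G$ (terminal vertex of $e_j$ equals initial vertex of $e_{j+1}$), and $\mathcal{K}_I^+$ the subset coming from paths whose initial vertex lies in $I$. On cylinder sets $[\varepsilon_1,\ldots,\varepsilon_k]$ (sequences with $x_1=\varepsilon_1,\ldots,x_k=\varepsilon_k$), $\mu^+([\varepsilon_1,\ldots,\varepsilon_k])=\lambda^{-k}\mathbf v_L^{\mathsf T}M_{\varepsilon_1}\cdots M_{\varepsilon_k}\mathbf v_R$ defines a Borel probability measure on $\mathcal{K}^+$ and $\mu_I^+([\varepsilon_1,\ldots,\varepsilon_k])=\lambda^{-k}\mathbf v_I^{\mathsf T}M_{\varepsilon_1}\cdots M_{\varepsilon_k}\mathbf v_R/(\mathbf v_I^{\mathsf T}\mathbf v_R)$ one on $\mathcal{K}_I^+$. A Pisot number is an algebraic integer $>1$ all of whose other Galois conjugates have modulus $<1$ (integers $\ge2$ included). With $\phi^+(x)=\sum_{k\ge1}x_k\beta^{-k}$ (on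 $\mathcal{K}^+$, resp. its restriction $\phi_I^+$ to $\mathcal{K}_I^+$), $\nu=(\phi^+)_*(\mu^+)$ and $\nu_I=(\phi_I^+)_*(\mu_I^+)$. Fourier transforms are $\widehat{\nu}(t)=\int e^{-2\pi i x t}\,d\nu(x)$, and similarly for $\nu_I$. *)

theory Defs
  imports "HOL-Probability.Probability" "HOL-Computational_Algebra.Polynomial"
begin

definition pisot :: "real \<Rightarrow> bool" where
  "pisot \<beta> \<longleftrightarrow> \<beta> > 1 \<and>
     (\<exists>p :: int poly. lead_coeff p = 1 \<and> irreducible p \<and>
        poly (map_poly of_int p) \<beta> = 0 \<and>
        (\<forall>z :: complex. poly (map_poly of_int p) z = 0 \<and> z \<noteq> complex_of_real \<beta> \<longrightarrow> cmod z < 1))"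

primrec matpow :: "'a::comm_ring_1^'n^'n \<Rightarrow> nat \<Rightarrow> 'a^'n^'n" where
  "matpow A 0 = mat 1"
| "matpow A (Suc k) = matpow A k ** A"

definition primitive_matrix :: "real^'n^'n \<Rightarrow> bool" where
  "primitive_matrix A \<longleftrightarrow> (\<forall>i j. A $ i $ j \<ge> 0) \<and>
     (\<exists>k>0. \<forall>i j. matpow A k $ i $ j > 0)"

text \<open>Labelled graph on vertex type 'v (V = UNIV), edges E, labelling l.\<close>
definition label_matrix :: "('v \<times> 'v) set \<Rightarrow> ('v \<times> 'v \<Rightarrow> int) \<Rightarrow> int \<Rightarrow> real^'v^'v" where
  "label_matrix E l a = (\<chi> i j. if (i, j) \<in> E \<and> l (i, j) = a then 1 else 0)"

definition total_matrix :: "int set \<Rightarrow> ('v \<times> 'v) set \<Rightarrow> ('v \<times> 'v \<Rightarrow> int) \<Rightarrow> real^'v^'v" where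
  "total_matrix A E l = (\<Sum>a\<in>A. label_matrix E l a)"

definition word_matrix :: "('v \<times> 'v) set \<Rightarrow> ('v \<times> 'v \<Rightarrow> int) \<Rightarrow> int list \<Rightarrow> real^'v^'v" where
  "word_matrix E l ws = foldr (\<lambda>a P. label_matrix E l a ** P) ws (mat 1)"

text \<open>Sequence space A^N; sequences x are indexed from 0, so x 0 is x_1 of the paper.\<close>
definition seq_space :: "int set \<Rightarrow> (nat \<Rightarrow> int) measure" where
  "seq_space A = PiM UNIV (\<lambda>_. count_space A)"

definition cylinder :: "int set \<Rightarrow> int list \<Rightarrow> (nat \<Rightarrow> int) set" where
  "cylinder A ws = {x \<in> space (seq_space A). \<forall>j<length ws. x j = ws ! j}"

definition indicator_vec :: "'v set \<Rightarrow> real^'v" where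
  "indicator_vec I = (\<chi> i. if i \<in> I then 1 else 0)"

definition phi :: "real \<Rightarrow> (nat \<Rightarrow> int) \<Rightarrow> real" where
  "phi \<beta> x = (\<Sum>k. real_of_int (x k) / \<beta> ^ Suc k)"

definition fourier :: "real measure \<Rightarrow> real \<Rightarrow> complex" where
  "fourier \<nu> t = integral\<^sup>L \<nu> (\<lambda>x. exp (- 2 * complex_of_real pi * \<i> * complex_of_real (x * t)))"

definition Wmat :: "int set \<Rightarrow> ('v \<times> 'v) set \<Rightarrow> ('v \<times> 'v \<Rightarrow> int) \<Rightarrow> real \<Rightarrow> real \<Rightarrow> complex^'v^'v" where
  "Wmat A E l lam t = (\<chi> i j. complex_of_real (1 / lam) *
      (\<Sum>a\<in>A. exp (- 2 * complex_of_real pi * \<i> * complex_of_real (real_of_int a * t))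
               * complex_of_real (label_matrix E l a $ i $ j)))"

primrec partial_prod :: "(nat \<Rightarrow> complex^'v^'v) \<Rightarrow> nat \<Rightarrow> complex^'v^'v" where
  "partial_prod F 0 = mat 1"
| "partial_prod F (Suc N) = partial_prod F N ** F (Suc N)"

definition cmatrix :: "real^'v^'v \<Rightarrow> complex^'v^'v" where
  "cmatrix A = (\<chi> i j. complex_of_real (A $ i $ j))"

definition bilin :: "real^'v \<Rightarrow> complex^'v^'v \<Rightarrow> real^'v \<Rightarrow> complex" where
  "bilin u P w = (\<Sum>i\<in>UNIV. \<Sum>j\<in>UNIV. complex_of_real (u $ i) * P $ i $ j * complex_of_real (w $ j))"

end

theory Submission
  imports Defs
begin

lemma matpow_add: "matpow X (a + b) = matpow X a ** matpow X b"
  by (induction b) (simp_all add: matrix_mul_assoc)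

lemma matpow_Suc': "matpow X (Suc m) = X ** matpow X m"
  using matpow_add[of X 1 m] by simp

lemma matpow_comm: "matpow X a ** matpow X b = matpow X b ** matpow X a"
  by (metis add.commute matpow_add)

lemma matpow_nonneg:
  fixes X :: "real^'v::finite^'v"
  assumes "\<And>i j. X $ i $ j \<ge> 0"
  shows "matpow X m $ i $ j \<ge> 0"
proof (induction m arbitrary: i j)
  case 0 then show ?case by (simp add: mat_def)
next
  case (Suc m) then show ?case
    by (simp add: matrix_matrix_mult_def assms sum_nonneg)
qed

lemma matpow_eigen:
  fixes X :: "real^'v::finite^'v"
  assumes "X *v v = v"
  shows "matpow X m *v v = v"
  by (induction m) (simp_all add: matrix_vector_mul_assoc[symmetric] assms)

lemma matpow_scale:
  fixes X :: "real^'v::finite^'v"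
  shows "matpow (\<chi> i j. c * X $ i $ j) m = (\<chi> i j. c ^ m * matpow X m $ i $ j)"
proof (induction m)
  case 0 then show ?case by (simp add: vec_eq_iff mat_def)
next
  case (Suc m) then show ?case
    by (simp add: vec_eq_iff matrix_matrix_mult_def sum_distrib_left algebra_simps)
qed

lemma row_bound:
  fixes X :: "real^'v::finite^'v"
  assumes "\<And>i j. X $ i $ j \<ge> 0" "X *v v = v" "\<And>i. v $ i > 0"
  shows "X $ i $ j * v $ j \<le> v $ i"
proof -
  have "X $ i $ j * v $ j \<le> (\<Sum>l\<in>UNIV. X $ i $ l * v $ l)"
    by (rule member_le_sum[where f = "\<lambda>l. X $ i $ l * v $ l"])
       (auto intro: mult_nonneg_nonneg assms less_imp_le)
  also have "\<dots> = (X *v v) $ i" by (simp add: matrix_vector_mult_def)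
  finally show ?thesis using assms by simp
qed

lemma avg_bounds:
  fixes w r :: "'v::finite \<Rightarrow> real"
  assumes w0: "\<And>l. 0 \<le> w l" and ws: "sum w UNIV = 1"
  shows "(\<Sum>l\<in>UNIV. w l * r l) \<le> Max (range r)"
    and "Min (range r) \<le> (\<Sum>l\<in>UNIV. w l * r l)"
proof -
  have "(\<Sum>l\<in>UNIV. w l * r l) \<le> (\<Sum>l\<in>UNIV. w l * Max (range r))"
    by (intro sum_mono mult_left_mono) (auto simp: w0)
  also have "\<dots> = Max (range r)" using ws by (simp add: sum_distrib_right[symmetric])
  finally show "(\<Sum>l\<in>UNIV. w l * r l) \<le> Max (range r)" .
  have "Min (range r) = (\<Sum>l\<in>UNIV. w l * Min (range r))" using ws by (simp add: sum_distrib_right[symmetric])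
  also have "\<dots> \<le> (\<Sum>l\<in>UNIV. w l * r l)"
    by (intro sum_mono mult_left_mono) (auto simp: w0)
  finally show "Min (range r) \<le> (\<Sum>l\<in>UNIV. w l * r l)" .
qed

lemma avg_contr:
  fixes w r :: "'v::finite \<Rightarrow> real"
  assumes wd: "\<And>l. d \<le> w l" and d0: "0 \<le> d" and ws: "sum w UNIV = 1"
  shows "(\<Sum>l\<in>UNIV. w l * r l) \<le> (1 - d) * Max (range r) + d * r l0"
    and "(1 - d) * Min (range r) + d * r l0 \<le> (\<Sum>l\<in>UNIV. w l * r l)"
proof -
  define w' where "w' = (\<lambda>l. w l - (if l = l0 then d else 0))"
  have w'0: "\<And>l. 0 \<le> w' l" using wd d0 by (auto simp: w'_def intro: order_trans[OF d0 wd])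
  have sw': "sum w' UNIV = 1 - d" using ws by (simp add: w'_def sum_subtractf)
  have split: "(\<Sum>l\<in>UNIV. w l * r l) = (\<Sum>l\<in>UNIV. w' l * r l) + d * r l0"
  proof -
    have e: "\<And>l. (if l = l0 then d else 0) * r l = (if l = l0 then d * r l else 0)" by simp
    have "(\<Sum>l\<in>UNIV. w' l * r l) = (\<Sum>l\<in>UNIV. w l * r l) - (\<Sum>l\<in>UNIV. (if l = l0 then d else 0) * r l)"
      by (simp add: w'_def left_diff_distrib sum_subtractf)
    also have "(\<Sum>l\<in>UNIV. (if l = l0 then d else 0) * r l) = d * r l0"
      by (simp only: e sum.delta') simp
    finally show ?thesis by simp
  qed
  have "(\<Sum>l\<in>UNIV. w' l * r l) \<le> (\<Sum>l\<in>UNIV. w' l * Max (range r))"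
    by (intro sum_mono mult_left_mono) (auto simp: w'0)
  also have "\<dots> = (1 - d) * Max (range r)" using sw' by (simp add: sum_distrib_right[symmetric])
  finally show "(\<Sum>l\<in>UNIV. w l * r l) \<le> (1 - d) * Max (range r) + d * r l0" using split by simp
  have "(1 - d) * Min (range r) = (\<Sum>l\<in>UNIV. w' l * Min (range r))" using sw' by (simp add: sum_distrib_right[symmetric])
  also have "\<dots> \<le> (\<Sum>l\<in>UNIV. w' l * r l)"
    by (intro sum_mono mult_left_mono) (auto simp: w'0)
  finally show "(1 - d) * Min (range r) + d * r l0 \<le> (\<Sum>l\<in>UNIV. w l * r l)" using split by simp
qed


lemma pf_conv:
  fixes B :: "real^'v::finite^'v" and v :: "real^'v"
  assumes nn: "\<And>i j. B $ i $ j \<ge> 0" and eig: "B *v v = v" and pos: "\<And>i. v $ i > 0"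
    and kpos: "\<And>i j. matpow B k $ i $ j > 0"
  shows "convergent (\<lambda>m. matpow B m $ i $ j)"
proof -
  define r where "r m i = matpow B m $ i $ j / v $ i" for m i
  define w where "w s i l = matpow B s $ i $ l * v $ l / v $ i" for s i l
  have vne: "v $ i \<noteq> 0" for i using pos[of i] by simp
  have rec: "r (s + m) i = (\<Sum>l\<in>UNIV. w s i l * r m l)" for s m i
  proof -
    have "r (s + m) i = (\<Sum>l\<in>UNIV. matpow B s $ i $ l * matpow B m $ l $ j) / v $ i"
      by (simp add: r_def matpow_add matrix_matrix_mult_def)
    also have "\<dots> = (\<Sum>l\<in>UNIV. w s i l * r m l)"
      by (simp add: w_def r_def sum_divide_distrib vne)
    finally show ?thesis .
  qed
  have w0: "0 \<le> w s i l" for s i l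
    using matpow_nonneg[OF nn] pos by (simp add: w_def less_imp_le)
  have ws: "sum (w s i) UNIV = 1" for s i
  proof -
    have "sum (w s i) UNIV = (matpow B s *v v) $ i / v $ i"
      by (simp add: w_def matrix_vector_mult_def sum_divide_distrib)
    also have "\<dots> = 1" by (simp add: matpow_eigen[OF eig] vne)
    finally show ?thesis .
  qed
  define Mx where "Mx m = Max (range (r m))" for m
  define Mn where "Mn m = Min (range (r m))" for m
  have rle: "r m i \<le> Mx m" "Mn m \<le> r m i" for m i by (auto simp: Mx_def Mn_def)
  have Mx_dec: "Mx (Suc m) \<le> Mx m" for m
  proof -
    have "r (1 + m) i \<le> Mx m" for i
      using rec[of 1 m i] avg_bounds(1)[of "w 1 i" "r m", OF w0 ws] by (simp add: Mx_def)
    then show ?thesis unfolding Mx_def by (auto intro: Max.boundedI)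
  qed
  have Mn_inc: "Mn m \<le> Mn (Suc m)" for m
  proof -
    have "Mn m \<le> r (1 + m) i" for i
      using rec[of 1 m i] avg_bounds(2)[of "w 1 i" "r m", OF w0 ws] by (simp add: Mn_def)
    then show ?thesis unfolding Mn_def by (auto intro: Min.boundedI)
  qed
  define \<delta> where "\<delta> = Min (range (\<lambda>(i, l). w k i l))"
  have \<delta>pos: "\<delta> > 0"
    unfolding \<delta>_def using kpos pos by (auto simp: w_def)
  define d where "d = min \<delta> (1/2)"
  have d: "0 < d" "d < 1" using \<delta>pos by (auto simp: d_def)
  have wd: "d \<le> w k i l" for i l
  proof -
    have "\<delta> \<le> w k i l" unfolding \<delta>_def by (rule Min_le) auto
    then show ?thesis by (simp add: d_def)
  qed
  define osc where "osc m = Mx m - Mn m" for m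
  fix l0 :: 'v
  have contr: "osc (k + m) \<le> (1 - d) * osc m" for m
  proof -
    have "r (k + m) i \<le> (1 - d) * Mx m + d * r m l0" for i
      using rec[of k m i] avg_contr(1)[of d "w k i" "r m" l0, OF wd _ ws] d by (simp add: Mx_def)
    then have a: "Mx (k + m) \<le> (1 - d) * Mx m + d * r m l0"
      unfolding Mx_def by (auto intro: Max.boundedI)
    have "(1 - d) * Mn m + d * r m l0 \<le> r (k + m) i" for i
      using rec[of k m i] avg_contr(2)[of d "w k i" "r m" l0, OF wd _ ws] d by (simp add: Mn_def)
    then have b: "(1 - d) * Mn m + d * r m l0 \<le> Mn (k + m)"
      unfolding Mn_def by (auto intro: Min.boundedI)
    show ?thesis using a b by (simp add: osc_def algebra_simps)
  qed
  have osc_nonneg: "0 \<le> osc m" for m using rle[of m l0] by (simp add: osc_def)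
  have osc_dec: "osc (Suc m) \<le> osc m" for m using Mx_dec[of m] Mn_inc[of m] by (simp add: osc_def)
  have osc_mono: "osc m' \<le> osc m" if "m \<le> m'" for m m'
    using that by (induction rule: dec_induct) (auto intro: order_trans[OF osc_dec])
  have osc_pow: "osc (n * k) \<le> (1 - d) ^ n * osc 0" for n
  proof (induction n)
    case 0 then show ?case by simp
  next
    case (Suc n)
    have "osc (Suc n * k) = osc (k + n * k)" by simp
    also have "\<dots> \<le> (1 - d) * osc (n * k)" by (rule contr)
    also have "\<dots> \<le> (1 - d) * ((1 - d) ^ n * osc 0)"
      using Suc d by (intro mult_left_mono) auto
    finally show ?case by simp
  qed
  have osc_lim: "osc \<longlonglongrightarrow> 0"
  proof (rule LIMSEQ_I)
    fix e :: real assume e: "0 < e"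
    have "(\<lambda>n. (1 - d) ^ n * osc 0) \<longlonglongrightarrow> 0 * osc 0"
      using d by (intro tendsto_mult tendsto_const LIMSEQ_realpow_zero) auto
    then obtain no where "\<forall>n\<ge>no. norm ((1 - d) ^ n * osc 0 - 0 * osc 0) < e"
      using e LIMSEQ_D by blast
    then have n: "(1 - d) ^ no * osc 0 < e" by auto
    define n where "n = no"
    show "\<exists>no. \<forall>m\<ge>no. norm (osc m - 0) < e"
    proof (intro exI allI impI)
      fix m assume "n * k \<le> m"
      then have "osc m \<le> osc (n * k)" by (rule osc_mono)
      then show "norm (osc m - 0) < e" using osc_pow[of n] n osc_nonneg[of m] by (simp add: n_def)
    qed
  qed
  have "antimono_on UNIV Mx" by (intro antimonoI) (metis Mx_dec decseq_Suc_iff decseqD)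
  moreover have "\<forall>m. Mn 0 \<le> Mx m"
    using Mn_inc rle by (meson incseq_SucI incseqD order_trans zero_le)
  ultimately obtain L where L: "Mx \<longlonglongrightarrow> L" by (rule decseq_convergent)
  have Mn_L: "Mn \<longlonglongrightarrow> L"
  proof -
    have "(\<lambda>m. Mx m - osc m) \<longlonglongrightarrow> L - 0" by (intro tendsto_diff L osc_lim)
    then show ?thesis by (simp add: osc_def)
  qed
  have "(\<lambda>m. r m i) \<longlonglongrightarrow> L"
    by (rule tendsto_sandwich[OF _ _ Mn_L L]) (auto simp: rle)
  then have "(\<lambda>m. r m i * v $ i) \<longlonglongrightarrow> L * v $ i" by (intro tendsto_mult tendsto_const)
  then show ?thesis by (auto simp: r_def vne convergent_def)
qed

lemma cmatrix_mult: "cmatrix (X ** Y) = cmatrix X ** cmatrix Y"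
  by (simp add: cmatrix_def vec_eq_iff matrix_matrix_mult_def)

lemma cmatrix_one: "cmatrix (mat 1) = mat 1"
  by (simp add: cmatrix_def vec_eq_iff mat_def)

lemma mm_diff_left: "(X - Y) ** (Z::'a::comm_ring_1^'n::finite^'n) = X ** Z - Y ** Z"
  by (simp add: vec_eq_iff matrix_matrix_mult_def sum_subtractf algebra_simps)

lemma mm_diff_right: "(Z::'a::comm_ring_1^'n::finite^'n) ** (X - Y) = Z ** X - Z ** Y"
  by (simp add: vec_eq_iff matrix_matrix_mult_def sum_subtractf algebra_simps)

lemma partial_prod_add:
  "partial_prod F (K + m) = partial_prod F K ** partial_prod (\<lambda>n. F (K + n)) m"
  by (induction m) (simp_all add: matrix_mul_assoc)

lemma bnd_mult:
  fixes X X' :: "complex^'v::finite^'v" and Y Y' :: "real^'v^'v"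
  assumes "\<And>i j. cmod (X $ i $ j) \<le> Y $ i $ j" "\<And>i j. cmod (X' $ i $ j) \<le> Y' $ i $ j"
  shows "cmod ((X ** X') $ i $ j) \<le> (Y ** Y') $ i $ j"
proof -
  have "cmod ((X ** X') $ i $ j) \<le> (\<Sum>l\<in>UNIV. cmod (X $ i $ l * X' $ l $ j))"
    unfolding matrix_matrix_mult_def by (simp add: sum_norm_le)
  also have "\<dots> \<le> (\<Sum>l\<in>UNIV. Y $ i $ l * Y' $ l $ j)"
    by (intro sum_mono, unfold norm_mult, rule mult_mono[OF assms(1) assms(2)])
       (auto intro: order_trans[OF norm_ge_zero assms(1)])
  finally show ?thesis by (simp add: matrix_matrix_mult_def)
qed

lemma tri3:
  fixes a b g g' :: "'a::real_normed_vector"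
  shows "norm (a - b) \<le> norm (a - g) + norm (g - g') + norm (b - g')"
proof -
  have "norm (g - b) \<le> norm (g - g') + norm (g' - b)"
    by (rule norm_diff_triangle_le) auto
  then have "norm (g - b) \<le> norm (g - g') + norm (b - g')" by (simp add: norm_minus_commute)
  then show ?thesis using norm_diff_triangle_le[of a g "norm (a - g)" b "norm (g - g') + norm (b - g')"]
    by simp
qed

lemma prod_conv:
  fixes F :: "nat \<Rightarrow> complex^'v::finite^'v" and B :: "real^'v^'v" and v :: "real^'v"
  assumes nn: "\<And>i j. B $ i $ j \<ge> 0" and eig: "B *v v = v" and pos: "\<And>i. v $ i > 0"
    and kpos: "\<And>i j. matpow B k $ i $ j > 0"
    and Fb: "\<And>n i j. cmod (F n $ i $ j) \<le> B $ i $ j"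
    and Fd: "\<And>n i j. cmod ((F n - cmatrix B) $ i $ j) \<le> c / \<beta> ^ n * B $ i $ j"
    and c: "c \<ge> 0" and \<beta>: "\<beta> > 1"
  shows "convergent (partial_prod F)"
proof -
  define Q where "Q K m = partial_prod (\<lambda>n. F (K + n)) m" for K m
  define S where "S K m = (\<Sum>n<m. c / \<beta> ^ (K + Suc n))" for K m
  have Bn: "\<And>i j. 0 \<le> matpow B m $ i $ j" for m by (rule matpow_nonneg[OF nn])
  have Qb: "cmod (Q K m $ i $ j) \<le> matpow B m $ i $ j" for K m i j
  proof (induction m arbitrary: i j)
    case 0 then show ?case by (simp add: Q_def mat_def)
  next
    case (Suc m)
    show ?case unfolding Q_def partial_prod.simps matpow.simps
      by (rule bnd_mult) (use Suc Fb in \<open>auto simp: Q_def\<close>)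
  qed
  have Qd: "cmod ((Q K m - cmatrix (matpow B m)) $ i $ j) \<le> S K m * matpow B m $ i $ j" for K m i j
  proof (induction m arbitrary: i j)
    case 0 then show ?case by (simp add: Q_def S_def cmatrix_one)
  next
    case (Suc m)
    let ?D = "Q K m - cmatrix (matpow B m)"
    let ?E = "F (K + Suc m) - cmatrix B"
    have eq: "Q K (Suc m) - cmatrix (matpow B (Suc m)) = ?D ** F (K + Suc m) + cmatrix (matpow B m) ** ?E"
      by (simp add: Q_def cmatrix_mult mm_diff_left mm_diff_right)
    have b1: "cmod ((?D ** F (K + Suc m)) $ i $ j) \<le> ((\<chi> i j. S K m * matpow B m $ i $ j) ** B) $ i $ j"
      by (rule bnd_mult) (use Suc Fb in auto)
    have b2: "cmod ((cmatrix (matpow B m) ** ?E) $ i $ j) \<le> (matpow B m ** (\<chi> i j. c / \<beta> ^ (K + Suc m) * B $ i $ j)) $ i $ j"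
      by (rule bnd_mult) (use Fd[of "K + Suc m"] Bn in \<open>auto simp: cmatrix_def\<close>)
    have "cmod ((Q K (Suc m) - cmatrix (matpow B (Suc m))) $ i $ j) \<le>
          ((\<chi> i j. S K m * matpow B m $ i $ j) ** B) $ i $ j + (matpow B m ** (\<chi> i j. c / \<beta> ^ (K + Suc m) * B $ i $ j)) $ i $ j"
      unfolding eq using b1 b2 norm_triangle_le by (simp add: norm_triangle_le)
    also have "\<dots> = S K (Suc m) * matpow B (Suc m) $ i $ j"
      by (simp add: matrix_matrix_mult_def S_def sum_distrib_left sum_distrib_right algebra_simps sum.distrib)
    finally show ?case .
  qed
  define T where "T K = c / (\<beta> ^ K * (\<beta> - 1))" for K
  have ST: "S K m \<le> T K" for K m
  proof -
    have "S K m \<le> T K * (1 - 1 / \<beta> ^ m)"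
    proof (induction m)
      case 0 then show ?case by (simp add: S_def)
    next
      case (Suc m)
      have "S K (Suc m) = S K m + c / \<beta> ^ (K + Suc m)" by (simp add: S_def)
      also have "\<dots> \<le> T K * (1 - 1 / \<beta> ^ m) + c / \<beta> ^ (K + Suc m)" using Suc by simp
      also have "\<dots> = T K * (1 - 1 / \<beta> ^ Suc m)"
        using \<beta> by (simp add: T_def field_simps power_add)
      finally show ?case .
    qed
    also have "\<dots> \<le> T K * 1"
      using \<beta> c by (intro mult_left_mono) (auto simp: T_def)
    also have "\<dots> = T K" by simp
    finally show ?thesis .
  qed
  have S0: "0 \<le> S K m" for K m using c \<beta> by (simp add: S_def sum_nonneg)
  have PQ: "partial_prod F (K + m) = partial_prod F K ** Q K m" for K m
    by (simp add: Q_def partial_prod_add)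
  have PB: "cmod (partial_prod F K $ i $ j) \<le> matpow B K $ i $ j" for K i j
    using Qb[of 0 K i j] by (simp add: Q_def)
  have vne: "v $ i \<noteq> 0" for i using pos[of i] by simp
  have main: "cmod ((partial_prod F (K + m) - partial_prod F K ** cmatrix (matpow B m)) $ i $ j)
      \<le> T K * (v $ i / v $ j)" for K m i j
  proof -
    have "partial_prod F (K + m) - partial_prod F K ** cmatrix (matpow B m) =
          partial_prod F K ** (Q K m - cmatrix (matpow B m))"
      by (simp add: PQ mm_diff_right)
    then have "cmod ((partial_prod F (K + m) - partial_prod F K ** cmatrix (matpow B m)) $ i $ j)
       \<le> (matpow B K ** (\<chi> i j. S K m * matpow B m $ i $ j)) $ i $ j"
      using bnd_mult[of "partial_prod F K" "matpow B K" "Q K m - cmatrix (matpow B m)"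
          "\<chi> i j. S K m * matpow B m $ i $ j"] PB Qd by simp
    also have "\<dots> = S K m * matpow B (K + m) $ i $ j"
      by (simp add: matpow_add matrix_matrix_mult_def sum_distrib_left algebra_simps)
    also have "\<dots> \<le> T K * (v $ i / v $ j)"
    proof (rule mult_mono[OF ST])
      show "matpow B (K + m) $ i $ j \<le> v $ i / v $ j"
        using row_bound[OF Bn matpow_eigen[OF eig] pos, of "K + m" i j] pos[of j]
        by (simp add: field_simps)
    qed (use Bn c \<beta> pos in \<open>auto simp: T_def intro: order_trans[OF S0 ST]\<close>)
    finally show ?thesis .
  qed
  have Bconv: "convergent (\<lambda>m. matpow B m $ i $ j)" for i j
    by (rule pf_conv[OF nn eig pos kpos])
  have entry: "Cauchy (\<lambda>n. partial_prod F n $ i $ j)" for i j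
  proof (rule CauchyI)
    fix e :: real assume e: "0 < e"
    define C where "C = v $ i / v $ j"
    have C: "0 < C" using pos by (simp add: C_def)
    have "(\<lambda>K. (c / (\<beta> - 1)) / \<beta> ^ K) \<longlonglongrightarrow> 0"
      using \<beta> by (intro LIMSEQ_divide_realpow_zero) auto
    then have "(\<lambda>K. T K * C) \<longlonglongrightarrow> 0 * C"
      by (intro tendsto_mult tendsto_const) (simp add: T_def field_simps)
    then obtain no where "\<forall>n\<ge>no. norm (T n * C - 0 * C) < e / 3"
      using e LIMSEQ_D[of "\<lambda>K. T K * C" "0 * C" "e / 3"] by auto
    then have "norm (T no * C - 0 * C) < e / 3" by auto
    then obtain K where K: "T K * C < e / 3" by (metis abs_less_iff real_norm_def diff_zero mult_zero_left)
    define g where "g m = (partial_prod F K ** cmatrix (matpow B m)) $ i $ j" for m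
    have "convergent g"
    proof -
      have "g = (\<lambda>m. \<Sum>l\<in>UNIV. partial_prod F K $ i $ l * complex_of_real (matpow B m $ l $ j))"
        by (simp add: g_def fun_eq_iff matrix_matrix_mult_def cmatrix_def)
      moreover have "convergent (\<lambda>m. \<Sum>l\<in>UNIV. partial_prod F K $ i $ l * complex_of_real (matpow B m $ l $ j))"
      proof -
        have "\<And>l. \<exists>L. (\<lambda>m. matpow B m $ l $ j) \<longlonglongrightarrow> L" using Bconv by (auto simp: convergent_def)
        then obtain L where L: "\<And>l. (\<lambda>m. matpow B m $ l $ j) \<longlonglongrightarrow> L l" by metis
        have "(\<lambda>m. \<Sum>l\<in>UNIV. partial_prod F K $ i $ l * complex_of_real (matpow B m $ l $ j))
           \<longlonglongrightarrow> (\<Sum>l\<in>UNIV. partial_prod F K $ i $ l * complex_of_real (L l))"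
          by (intro tendsto_sum tendsto_mult tendsto_const tendsto_of_real L)
        then show ?thesis unfolding convergent_def by blast
      qed
      ultimately show ?thesis by simp
    qed
    then have "Cauchy g" by (simp add: Cauchy_convergent_iff)
    then obtain N0 where N0: "\<And>m m'. m \<ge> N0 \<Longrightarrow> m' \<ge> N0 \<Longrightarrow> norm (g m - g m') < e / 3"
      using e CauchyD[of g "e / 3"] by auto
    show "\<exists>M. \<forall>m\<ge>M. \<forall>n\<ge>M. norm (partial_prod F m $ i $ j - partial_prod F n $ i $ j) < e"
    proof (intro exI allI impI)
      fix n n' assume n: "K + N0 \<le> n" and n': "K + N0 \<le> n'"
      define m where "m = n - K"
      define m' where "m' = n' - K"
      have m: "n = K + m" "N0 \<le> m" using n by (auto simp: m_def)
      have m': "n' = K + m'" "N0 \<le> m'" using n' by (auto simp: m'_def)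
      have gm: "\<And>m. partial_prod F (K + m) $ i $ j - g m = (partial_prod F (K + m) - partial_prod F K ** cmatrix (matpow B m)) $ i $ j"
        by (simp add: g_def)
      have a: "norm (partial_prod F n $ i $ j - g m) < e / 3"
        unfolding m(1) gm using main[of K m i j] K unfolding C_def by linarith
      have b: "norm (partial_prod F n' $ i $ j - g m') < e / 3"
        unfolding m'(1) gm using main[of K m' i j] K unfolding C_def by linarith
      have "norm (partial_prod F n $ i $ j - partial_prod F n' $ i $ j)
          \<le> norm (partial_prod F n $ i $ j - g m) + norm (g m - g m') + norm (partial_prod F n' $ i $ j - g m')"
        by (rule tri3)
      also have "\<dots> < e" using a b N0[OF m(2) m'(2)] by simp
      finally show "norm (partial_prod F n $ i $ j - partial_prod F n' $ i $ j) < e" .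
    qed
  qed
  have "\<And>i j. \<exists>L. (\<lambda>n. partial_prod F n $ i $ j) \<longlonglongrightarrow> L"
    using entry by (auto simp: Cauchy_convergent_iff convergent_def)
  then obtain L where L: "\<And>i j. (\<lambda>n. partial_prod F n $ i $ j) \<longlonglongrightarrow> L i j" by metis
  have "(\<lambda>n. \<chi> i. \<chi> j. partial_prod F n $ i $ j) \<longlonglongrightarrow> (\<chi> i. \<chi> j. L i j)"
    by (intro tendsto_vec_lambda L)
  then show ?thesis by (auto simp: convergent_def)
qed

lemma exp_bound: "cmod (exp (- 2 * complex_of_real pi * \<i> * complex_of_real x) - 1) \<le> 2 * pi * \<bar>x\<bar>"
proof -
  have "exp (- 2 * complex_of_real pi * \<i> * complex_of_real x) = exp (\<i> * complex_of_real (- 2 * pi * x))"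
    by (simp add: algebra_simps)
  moreover have "cmod (exp (\<i> * complex_of_real (- 2 * pi * x)) - 1) = 2 * \<bar>sin (- 2 * pi * x / 2)\<bar>"
    by (rule dist_exp_i_1)
  ultimately have "cmod (exp (- 2 * complex_of_real pi * \<i> * complex_of_real x) - 1) = 2 * \<bar>sin (- 2 * pi * x / 2)\<bar>"
    by simp
  also have "\<dots> \<le> 2 * \<bar>- 2 * pi * x / 2\<bar>" using abs_sin_x_le_abs_x by simp
  also have "\<dots> = 2 * pi * \<bar>x\<bar>" by (simp add: abs_mult)
  finally show ?thesis .
qed

lemma exp_norm1: "cmod (exp (- 2 * complex_of_real pi * \<i> * complex_of_real x)) = 1"
proof -
  have "exp (- 2 * complex_of_real pi * \<i> * complex_of_real x) = exp (\<i> * complex_of_real (- 2 * pi * x))"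
    by (simp add: algebra_simps)
  then show ?thesis by simp
qed

lemma label_nonneg: "0 \<le> label_matrix E l a $ i $ j"
  by (simp add: label_matrix_def)

lemma total_entry: "total_matrix A E l $ i $ j = (\<Sum>a\<in>A. label_matrix E l a $ i $ j)"
  by (simp add: total_matrix_def sum_component)

lemma W_bounds:
  fixes A :: "int set" and E :: "('v::finite \<times> 'v) set"
    and l :: "'v \<times> 'v \<Rightarrow> int"
  assumes A: "finite A" and lam: "lam > 0"
  defines "B \<equiv> (\<chi> i j. (1 / lam) * total_matrix A E l $ i $ j)"
  shows "cmod (Wmat A E l lam s $ i $ j) \<le> B $ i $ j"
    and "cmod ((Wmat A E l lam s - cmatrix B) $ i $ j) \<le> (2 * pi * (\<Sum>a\<in>A. \<bar>real_of_int a\<bar>) * \<bar>s\<bar>) * B $ i $ j"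
proof -
  let ?e = "\<lambda>a. exp (- 2 * complex_of_real pi * \<i> * complex_of_real (real_of_int a * s))"
  let ?L = "\<lambda>a. label_matrix E l a $ i $ j"
  have W: "Wmat A E l lam s $ i $ j = complex_of_real (1 / lam) * (\<Sum>a\<in>A. ?e a * complex_of_real (?L a))"
    by (simp add: Wmat_def)
  have Bij: "B $ i $ j = (1 / lam) * (\<Sum>a\<in>A. ?L a)" by (simp add: B_def total_entry)
  have "cmod (Wmat A E l lam s $ i $ j) = (1 / lam) * cmod (\<Sum>a\<in>A. ?e a * complex_of_real (?L a))"
    unfolding W norm_mult using lam by (simp add: norm_divide)
  also have "\<dots> \<le> (1 / lam) * (\<Sum>a\<in>A. cmod (?e a * complex_of_real (?L a)))"
    using lam by (intro mult_left_mono norm_sum) auto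
  also have "\<dots> = B $ i $ j" by (simp add: Bij norm_mult exp_norm1 label_nonneg)
  finally show "cmod (Wmat A E l lam s $ i $ j) \<le> B $ i $ j" .
  define c where "c = 2 * pi * (\<Sum>a\<in>A. \<bar>real_of_int a\<bar>) * \<bar>s\<bar>"
  have "(Wmat A E l lam s - cmatrix B) $ i $ j = complex_of_real (1 / lam) * (\<Sum>a\<in>A. (?e a - 1) * complex_of_real (?L a))"
    by (simp add: W cmatrix_def Bij algebra_simps sum_subtractf sum_distrib_left)
  then have "cmod ((Wmat A E l lam s - cmatrix B) $ i $ j) = (1 / lam) * cmod (\<Sum>a\<in>A. (?e a - 1) * complex_of_real (?L a))"
    using lam by (simp add: norm_mult norm_divide)
  also have "\<dots> \<le> (1 / lam) * (\<Sum>a\<in>A. cmod ((?e a - 1) * complex_of_real (?L a)))"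
    using lam by (intro mult_left_mono norm_sum) auto
  also have "\<dots> \<le> (1 / lam) * (\<Sum>a\<in>A. c * ?L a)"
  proof (intro mult_left_mono sum_mono)
    fix a assume a: "a \<in> A"
    have "cmod (?e a - 1) \<le> 2 * pi * \<bar>real_of_int a * s\<bar>" by (rule exp_bound)
    also have "\<dots> \<le> c"
    proof -
      have "\<bar>real_of_int a\<bar> \<le> (\<Sum>a\<in>A. \<bar>real_of_int a\<bar>)"
        by (rule member_le_sum[OF a]) (auto simp: A)
      then have "\<bar>real_of_int a\<bar> * \<bar>s\<bar> \<le> (\<Sum>a\<in>A. \<bar>real_of_int a\<bar>) * \<bar>s\<bar>"
        by (rule mult_right_mono) auto
      then show ?thesis unfolding c_def abs_mult by (simp add: mult.assoc)
    qed
    finally show "cmod ((?e a - 1) * complex_of_real (?L a)) \<le> c * ?L a"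
      by (simp add: norm_mult label_nonneg mult_right_mono)
  qed (use lam in auto)
  also have "\<dots> = c * B $ i $ j" by (simp add: Bij sum_distrib_left)
  finally show "cmod ((Wmat A E l lam s - cmatrix B) $ i $ j) \<le> (2 * pi * (\<Sum>a\<in>A. \<bar>real_of_int a\<bar>) * \<bar>s\<bar>) * B $ i $ j"
    by (simp add: c_def)
qed


lemma W_conv:
  fixes A :: "int set" and E :: "('v::finite \<times> 'v) set" and vR :: "real^'v"
  assumes A: "finite A" and lam: "lam > 0" and prim: "primitive_matrix (total_matrix A E l)"
    and pos: "\<And>i. vR $ i > 0" and eig: "total_matrix A E l *v vR = lam *\<^sub>R vR"
    and \<beta>: "\<beta> > 1"
  shows "convergent (partial_prod (\<lambda>n. Wmat A E l lam (t / \<beta> ^ n)))"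
proof -
  define M where "M = total_matrix A E l"
  define B where "B = (\<chi> i j. (1 / lam) * M $ i $ j)"
  define c where "c = 2 * pi * (\<Sum>a\<in>A. \<bar>real_of_int a\<bar>) * \<bar>t\<bar>"
  obtain k where k: "k > 0" "\<And>i j. matpow M k $ i $ j > 0" and Mnn: "\<And>i j. M $ i $ j \<ge> 0"
    using prim unfolding primitive_matrix_def M_def by blast
  show ?thesis
  proof (rule prod_conv[where B = B and v = vR and k = k and c = c and \<beta> = \<beta>])
    show "\<And>i j. 0 \<le> B $ i $ j" using Mnn lam by (simp add: B_def)
    show "B *v vR = vR"
    proof -
      have "B *v vR = (1 / lam) *\<^sub>R (M *v vR)"
        by (simp add: B_def vec_eq_iff matrix_vector_mult_def sum_distrib_left algebra_simps)
      then show ?thesis using eig lam by (simp add: M_def)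
    qed
    show "\<And>i. 0 < vR $ i" by (rule pos)
    have "matpow B k = (\<chi> i j. (1 / lam) ^ k * matpow M k $ i $ j)"
      unfolding B_def by (rule matpow_scale)
    then show "\<And>i j. 0 < matpow B k $ i $ j"
      using k lam by simp
    show "\<And>n i j. cmod (Wmat A E l lam (t / \<beta> ^ n) $ i $ j) \<le> B $ i $ j"
      using W_bounds(1)[OF A lam] by (simp add: B_def M_def)
    show "\<And>n i j. cmod ((Wmat A E l lam (t / \<beta> ^ n) - cmatrix B) $ i $ j) \<le> c / \<beta> ^ n * B $ i $ j"
    proof -
      fix n i j
      have ab: "\<bar>\<beta> ^ n\<bar> = \<beta> ^ n" using \<beta> by simp
      have "\<bar>t / \<beta> ^ n\<bar> = \<bar>t\<bar> / \<beta> ^ n" by (simp add: abs_divide ab)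
      then show "cmod ((Wmat A E l lam (t / \<beta> ^ n) - cmatrix B) $ i $ j) \<le> c / \<beta> ^ n * B $ i $ j"
        using W_bounds(2)[OF A lam, of E l "t / \<beta> ^ n" i j] by (simp add: B_def M_def c_def ab)
    qed
    show "0 \<le> c" by (simp add: c_def sum_nonneg)
    show "1 < \<beta>" by (rule \<beta>)
  qed
qed

definition words :: "int set \<Rightarrow> nat \<Rightarrow> int list set" where
  "words A N = {ws. set ws \<subseteq> A \<and> length ws = N}"

lemma words_finite: "finite A \<Longrightarrow> finite (words A N)"
  by (simp add: words_def finite_lists_length_eq)

lemma words_Suc: "words A (Suc N) = (\<lambda>(ws, a). ws @ [a]) ` (words A N \<times> A)"
proof
  show "words A (Suc N) \<subseteq> (\<lambda>(ws, a). ws @ [a]) ` (words A N \<times> A)"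
  proof
    fix ws assume ws: "ws \<in> words A (Suc N)"
    then have "ws \<noteq> []" by (auto simp: words_def)
    then have "ws = butlast ws @ [last ws]" by simp
    moreover have "(butlast ws, last ws) \<in> words A N \<times> A"
      using ws \<open>ws \<noteq> []\<close> by (auto simp: words_def dest: in_set_butlastD)
    ultimately show "ws \<in> (\<lambda>(ws, a). ws @ [a]) ` (words A N \<times> A)" by force
  qed
qed (auto simp: words_def)

lemma words_inj: "inj_on (\<lambda>(ws, a). ws @ [a]) X"
  by (auto simp: inj_on_def)

lemma foldr_mat: "foldr (\<lambda>a P. label_matrix E l a ** P) ws X = foldr (\<lambda>a P. label_matrix E l a ** P) ws (mat 1) ** X"
  by (induction ws) (simp_all add: matrix_mul_assoc)

lemma wm_snoc: "word_matrix E l (ws @ [a]) = word_matrix E l ws ** label_matrix E l a"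
  unfolding word_matrix_def using foldr_mat[of E l ws "label_matrix E l a"] by simp

definition ee :: "real \<Rightarrow> int \<Rightarrow> complex" where
  "ee s a = exp (- 2 * complex_of_real pi * \<i> * complex_of_real (real_of_int a * s))"

lemma pp_expand:
  fixes E :: "('v::finite \<times> 'v) set"
  assumes A: "finite A"
  shows "partial_prod (\<lambda>n. Wmat A E l lam (s n)) N $ i $ j =
    (\<Sum>ws\<in>words A N. (\<Prod>k<N. ee (s (Suc k)) (ws ! k)) * complex_of_real (word_matrix E l ws $ i $ j / lam ^ N))"
proof (induction N arbitrary: j)
  case 0
  have "words A 0 = {[]}" by (auto simp: words_def)
  then show ?case by (simp add: mat_def word_matrix_def)
next
  case (Suc N)
  let ?c = "\<lambda>ws. (\<Prod>k<N. ee (s (Suc k)) (ws ! k))"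
  have "partial_prod (\<lambda>n. Wmat A E l lam (s n)) (Suc N) $ i $ j =
     (\<Sum>m\<in>UNIV. partial_prod (\<lambda>n. Wmat A E l lam (s n)) N $ i $ m * Wmat A E l lam (s (Suc N)) $ m $ j)"
    by (simp add: matrix_matrix_mult_def)
  also have "\<dots> = (\<Sum>m\<in>UNIV. (\<Sum>ws\<in>words A N. ?c ws * complex_of_real (word_matrix E l ws $ i $ m / lam ^ N)) *
       (complex_of_real (1 / lam) * (\<Sum>a\<in>A. ee (s (Suc N)) a * complex_of_real (label_matrix E l a $ m $ j))))"
    by (simp only: Suc.IH) (simp add: Wmat_def ee_def)
  also have "\<dots> = (\<Sum>ws\<in>words A N. \<Sum>a\<in>A. ?c ws * ee (s (Suc N)) a *
       complex_of_real ((\<Sum>m\<in>UNIV. word_matrix E l ws $ i $ m * label_matrix E l a $ m $ j) / lam ^ Suc N))"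
    by (simp add: sum_distrib_left sum_distrib_right sum_divide_distrib sum.swap[of _ UNIV] mult_ac)
  also have "\<dots> = (\<Sum>p\<in>words A N \<times> A. (\<Prod>k<Suc N. ee (s (Suc k)) ((fst p @ [snd p]) ! k)) *
       complex_of_real (word_matrix E l (fst p @ [snd p]) $ i $ j / lam ^ Suc N))"
  proof (subst sum.cartesian_product, intro sum.cong refl, clarify)
    fix ws a assume ws: "ws \<in> words A N"
    then have len: "length ws = N" by (simp add: words_def)
    have "(\<Prod>k<Suc N. ee (s (Suc k)) ((ws @ [a]) ! k)) = ?c ws * ee (s (Suc N)) a"
      using len by (simp add: nth_append)
    then show "?c ws * ee (s (Suc N)) a *
       complex_of_real ((\<Sum>m\<in>UNIV. word_matrix E l ws $ i $ m * label_matrix E l a $ m $ j) / lam ^ Suc N) =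
       (\<Prod>k<Suc N. ee (s (Suc k)) ((fst (ws, a) @ [snd (ws, a)]) ! k)) *
       complex_of_real (word_matrix E l (fst (ws, a) @ [snd (ws, a)]) $ i $ j / lam ^ Suc N)"
      by (simp add: wm_snoc matrix_matrix_mult_def)
  qed
  also have "\<dots> = (\<Sum>ws\<in>words A (Suc N). (\<Prod>k<Suc N. ee (s (Suc k)) (ws ! k)) *
       complex_of_real (word_matrix E l ws $ i $ j / lam ^ Suc N))"
    unfolding words_Suc by (subst sum.reindex[OF words_inj]) (simp add: case_prod_beta)
  finally show ?case .
qed

lemma space_seq: "space (seq_space A) = {x. \<forall>k. x k \<in> A}"
  by (auto simp: seq_space_def space_PiM PiE_def Pi_def extensional_def)

lemma cyl_sets: "cylinder A ws \<in> sets (seq_space A)"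
  unfolding cylinder_def seq_space_def by measurable

lemma comp_meas[measurable]: "(\<lambda>x. real_of_int (x k)) \<in> borel_measurable (seq_space A)"
proof -
  have "(\<lambda>x. x k) \<in> seq_space A \<rightarrow>\<^sub>M count_space A"
    unfolding seq_space_def by (rule measurable_component_singleton) simp
  moreover have "(\<lambda>a. real_of_int a) \<in> count_space A \<rightarrow>\<^sub>M borel"
    by (simp add: measurable_count_space_eq1)
  ultimately show ?thesis by (rule measurable_compose)
qed


lemma bilin_expand:
  fixes E :: "('v::finite \<times> 'v) set" and u w :: "real^'v"
  assumes A: "finite A"
  shows "bilin u (partial_prod (\<lambda>n. Wmat A E l lam (s n)) N) w =
    (\<Sum>ws\<in>words A N. (\<Prod>k<N. ee (s (Suc k)) (ws ! k)) *
        complex_of_real (u \<bullet> (word_matrix E l ws *v w) / lam ^ N))"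
proof -
  have "bilin u (partial_prod (\<lambda>n. Wmat A E l lam (s n)) N) w =
     (\<Sum>i\<in>UNIV. \<Sum>j\<in>UNIV. \<Sum>ws\<in>words A N. complex_of_real (u $ i) * ((\<Prod>k<N. ee (s (Suc k)) (ws ! k)) *
        complex_of_real (word_matrix E l ws $ i $ j / lam ^ N)) * complex_of_real (w $ j))"
    unfolding bilin_def pp_expand[OF A] by (simp add: sum_distrib_left sum_distrib_right)
  also have "\<dots> = (\<Sum>ws\<in>words A N. \<Sum>i\<in>UNIV. \<Sum>j\<in>UNIV. (\<Prod>k<N. ee (s (Suc k)) (ws ! k)) *
        complex_of_real (u $ i * word_matrix E l ws $ i $ j * w $ j / lam ^ N))"
    by (subst sum.swap, subst (2) sum.swap) (simp add: mult_ac)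
  also have "\<dots> = (\<Sum>ws\<in>words A N. (\<Prod>k<N. ee (s (Suc k)) (ws ! k)) *
        complex_of_real (u \<bullet> (word_matrix E l ws *v w) / lam ^ N))"
    by (simp add: inner_vec_def matrix_vector_mult_def sum_distrib_left sum_divide_distrib mult_ac)
  finally show ?thesis .
qed


lemma integral_N:
  fixes \<nu> :: "(nat \<Rightarrow> int) measure" and u vR :: "real^'v::finite" and E :: "('v \<times> 'v) set"
  assumes A: "finite A" and sp: "sets \<nu> = sets (seq_space A)" and pr: "prob_space \<nu>"
    and cyl: "\<And>ws. set ws \<subseteq> A \<Longrightarrow>
      measure \<nu> (cylinder A ws) = u \<bullet> (word_matrix E l ws *v vR) / (lam ^ length ws * cc)"
  shows "(\<integral>x. exp (- 2 * complex_of_real pi * \<i> * complex_of_real ((\<Sum>k<N. real_of_int (x k) / \<beta> ^ Suc k) * t)) \<partial>\<nu>)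
     = bilin u (partial_prod (\<lambda>n. Wmat A E l lam (t / \<beta> ^ n)) N) vR / complex_of_real cc"
proof -
  define H where "H ws = (\<Prod>k<N. ee (t / \<beta> ^ Suc k) (ws ! k))" for ws
  have spc: "space \<nu> = {x. \<forall>k. x k \<in> A}"
    using sets_eq_imp_space_eq[OF sp] space_seq by simp
  have cylS: "cylinder A ws \<in> sets \<nu>" for ws using cyl_sets sp by simp
  interpret prob_space \<nu> by (rule pr)
  have fin: "emeasure \<nu> (cylinder A ws) < \<infinity>" for ws by (simp add: less_top[symmetric])
  have pt: "exp (- 2 * complex_of_real pi * \<i> * complex_of_real ((\<Sum>k<N. real_of_int (x k) / \<beta> ^ Suc k) * t))
      = (\<Sum>ws\<in>words A N. indicator (cylinder A ws) x *\<^sub>R H ws)" if x: "x \<in> space \<nu>" for x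
  proof -
    define w0 where "w0 = map x [0..<N]"
    have w0: "w0 \<in> words A N" using x spc by (auto simp: words_def w0_def)
    have ind: "indicator (cylinder A ws) x = (if w0 = ws then 1 else (0::real))" if "ws \<in> words A N" for ws
    proof -
      have "x \<in> space (seq_space A)" using x spc space_seq by simp
      moreover have "(\<forall>j<length ws. x j = ws ! j) \<longleftrightarrow> w0 = ws"
        using that by (auto simp: words_def w0_def list_eq_iff_nth_eq)
      ultimately show ?thesis by (auto simp: cylinder_def indicator_def)
    qed
    have "(\<Sum>ws\<in>words A N. indicator (cylinder A ws) x *\<^sub>R H ws) = (\<Sum>ws\<in>words A N. if w0 = ws then H ws else 0)"
      by (intro sum.cong refl) (simp add: ind)
    also have "\<dots> = H w0" using w0 by (simp add: sum.delta words_finite[OF A])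
    also have "\<dots> = (\<Prod>k<N. exp (- 2 * complex_of_real pi * \<i> * complex_of_real (real_of_int (x k) / \<beta> ^ Suc k * t)))"
      unfolding H_def ee_def w0_def by (intro prod.cong refl) (simp add: algebra_simps)
    also have "\<dots> = exp (\<Sum>k<N. - 2 * complex_of_real pi * \<i> * complex_of_real (real_of_int (x k) / \<beta> ^ Suc k * t))"
      by (simp add: exp_sum)
    also have "\<dots> = exp (- 2 * complex_of_real pi * \<i> * complex_of_real ((\<Sum>k<N. real_of_int (x k) / \<beta> ^ Suc k) * t))"
      by (simp add: sum_distrib_left sum_distrib_right)
    finally show ?thesis by simp
  qed
  have "has_bochner_integral \<nu> (\<lambda>x. \<Sum>ws\<in>words A N. indicator (cylinder A ws) x *\<^sub>R H ws)
      (\<Sum>ws\<in>words A N. measure \<nu> (cylinder A ws) *\<^sub>R H ws)"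
    by (intro has_bochner_integral_sum has_bochner_integral_indicator cylS fin)
  then have "(\<integral>x. exp (- 2 * complex_of_real pi * \<i> * complex_of_real ((\<Sum>k<N. real_of_int (x k) / \<beta> ^ Suc k) * t)) \<partial>\<nu>)
      = (\<Sum>ws\<in>words A N. measure \<nu> (cylinder A ws) *\<^sub>R H ws)"
    by (subst Bochner_Integration.integral_cong[OF refl pt]) (auto simp: has_bochner_integral_integral_eq)
  also have "\<dots> = (\<Sum>ws\<in>words A N. H ws * complex_of_real (u \<bullet> (word_matrix E l ws *v vR) / lam ^ N)) / complex_of_real cc"
    unfolding sum_divide_distrib
  proof (intro sum.cong refl)
    fix ws assume ws: "ws \<in> words A N"
    then have "measure \<nu> (cylinder A ws) = u \<bullet> (word_matrix E l ws *v vR) / (lam ^ N * cc)"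
      using cyl[of ws] by (auto simp: words_def)
    then show "measure \<nu> (cylinder A ws) *\<^sub>R H ws = H ws * complex_of_real (u \<bullet> (word_matrix E l ws *v vR) / lam ^ N) / complex_of_real cc"
      by (simp add: scaleR_conv_of_real field_simps)
  qed
  also have "\<dots> = bilin u (partial_prod (\<lambda>n. Wmat A E l lam (t / \<beta> ^ n)) N) vR / complex_of_real cc"
    by (simp add: bilin_expand[OF A] H_def)
  finally show ?thesis .
qed


lemma bilin_tendsto:
  assumes "X \<longlonglongrightarrow> P"
  shows "(\<lambda>n. bilin u (X n) w) \<longlonglongrightarrow> bilin u P w"
  unfolding bilin_def
  by (intro tendsto_sum tendsto_mult tendsto_const tendsto_vec_nth assms)

lemma fourier_lim:
  fixes \<nu> :: "(nat \<Rightarrow> int) measure" and u vR :: "real^'v::finite" and E :: "('v \<times> 'v) set"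
  assumes A: "finite A" and sp: "sets \<nu> = sets (seq_space A)" and pr: "prob_space \<nu>"
    and cyl: "\<And>ws. set ws \<subseteq> A \<Longrightarrow>
      measure \<nu> (cylinder A ws) = u \<bullet> (word_matrix E l ws *v vR) / (lam ^ length ws * cc)"
    and \<beta>: "\<beta> > 1"
    and P: "partial_prod (\<lambda>n. Wmat A E l lam (t / \<beta> ^ n)) \<longlonglongrightarrow> P"
  shows "fourier (distr \<nu> borel (phi \<beta>)) t = bilin u P vR / complex_of_real cc"
proof -
  interpret prob_space \<nu> by (rule pr)
  define h where "h N x = exp (- 2 * complex_of_real pi * \<i> * complex_of_real ((\<Sum>k<N. real_of_int (x k) / \<beta> ^ Suc k) * t))" for N x
  define f where "f x = exp (- 2 * complex_of_real pi * \<i> * complex_of_real (phi \<beta> x * t))" for x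
  have spc: "space \<nu> = {x. \<forall>k. x k \<in> A}"
    using sets_eq_imp_space_eq[OF sp] space_seq by simp
  have meq: "measurable \<nu> = measurable (seq_space A)"
    by (intro ext measurable_cong_sets sp refl)
  have lim: "(\<lambda>N. \<Sum>k<N. real_of_int (x k) / \<beta> ^ Suc k) \<longlonglongrightarrow> phi \<beta> x" if x: "x \<in> space \<nu>" for x
  proof -
    define S where "S = (\<Sum>a\<in>A. \<bar>real_of_int a\<bar>)"
    have "norm (real_of_int (x k) / \<beta> ^ Suc k) \<le> S * (1 / \<beta>) ^ k" for k
    proof -
      have xk: "\<bar>real_of_int (x k)\<bar> \<le> S"
        unfolding S_def using x spc by (intro member_le_sum[where f = "\<lambda>a. \<bar>real_of_int a\<bar>"]) (auto simp: A)
      have "\<beta> ^ k \<le> \<beta> ^ Suc k" using \<beta> by simp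
      then have "\<bar>real_of_int (x k)\<bar> / \<beta> ^ Suc k \<le> S / \<beta> ^ k"
        using \<beta> xk by (intro frac_le) auto
      moreover have "\<bar>\<beta> ^ Suc k\<bar> = \<beta> ^ Suc k" using \<beta> by simp
      ultimately show ?thesis by (simp only: real_norm_def abs_divide power_divide) simp
    qed
    note b = this
    have g: "summable (\<lambda>k. S * (1 / \<beta>) ^ k)"
      using \<beta> by (intro summable_mult summable_geometric) auto
    have "summable (\<lambda>k. real_of_int (x k) / \<beta> ^ Suc k)"
      by (rule summable_comparison_test'[where N = 0, OF g b])
    then show ?thesis unfolding phi_def by (rule summable_LIMSEQ)
  qed
  have hmeas: "h N \<in> borel_measurable \<nu>" for N
    unfolding meq h_def by measurable
  have phimeas: "phi \<beta> \<in> borel_measurable \<nu>"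
    unfolding meq
    by (rule borel_measurable_LIMSEQ_real[where u = "\<lambda>N x. \<Sum>k<N. real_of_int (x k) / \<beta> ^ Suc k"])
       (use lim spc space_seq sets_eq_imp_space_eq[OF sp] in auto)
  have fmeas: "f \<in> borel_measurable \<nu>"
    unfolding f_def using phimeas by measurable
  have "fourier (distr \<nu> borel (phi \<beta>)) t = integral\<^sup>L \<nu> f"
    unfolding fourier_def f_def
    by (subst integral_distr[OF phimeas]) (auto intro!: borel_measurable_continuous_onI continuous_intros)
  moreover have "(\<lambda>N. integral\<^sup>L \<nu> (h N)) \<longlonglongrightarrow> integral\<^sup>L \<nu> f"
  proof (rule integral_dominated_convergence[where w = "\<lambda>_. 1"])
    show "f \<in> borel_measurable \<nu>" by (rule fmeas)
    show "\<And>N. h N \<in> borel_measurable \<nu>" by (rule hmeas)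
    show "integrable \<nu> (\<lambda>_. 1::real)" by simp
    show "AE x in \<nu>. (\<lambda>N. h N x) \<longlonglongrightarrow> f x"
      unfolding h_def f_def
      by (intro AE_I2 tendsto_intros lim)
    show "\<And>N. AE x in \<nu>. norm (h N x) \<le> 1"
      by (intro AE_I2) (simp add: h_def exp_norm1)
  qed
  moreover have "(\<lambda>N. integral\<^sup>L \<nu> (h N)) \<longlonglongrightarrow> bilin u P vR / complex_of_real cc"
  proof -
    have "(\<lambda>N. bilin u (partial_prod (\<lambda>n. Wmat A E l lam (t / \<beta> ^ n)) N) vR / complex_of_real cc)
        \<longlonglongrightarrow> bilin u P vR / complex_of_real cc"
      using tendsto_mult_right[OF bilin_tendsto[OF P], of u vR "inverse (complex_of_real cc)"]
      by (simp add: divide_inverse)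
    moreover have "integral\<^sup>L \<nu> (h N) = bilin u (partial_prod (\<lambda>n. Wmat A E l lam (t / \<beta> ^ n)) N) vR / complex_of_real cc" for N
      unfolding h_def by (rule integral_N[OF A sp pr cyl])
    ultimately show ?thesis by simp
  qed
  ultimately show ?thesis using LIMSEQ_unique by metis
qed

theorem proposition9:
  fixes A :: "int set" and E :: "('v::finite \<times> 'v) set" and l :: "'v \<times> 'v \<Rightarrow> int"
    and I :: "'v set" and \<beta> lam :: real and vL vR :: "real^'v"
    and \<mu> \<mu>I :: "(nat \<Rightarrow> int) measure"
  assumes A_fin: "finite A"
    and labels: "l ` E \<subseteq> A"
    and I_ne: "I \<noteq> {}"
    and prim: "primitive_matrix (total_matrix A E l)"
    and pis: "pisot \<beta>"
    and lam_pos: "lam > 0"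
    and lam_dom: "\<And>(c::complex) v. v \<noteq> 0 \<Longrightarrow>
                   cmatrix (total_matrix A E l) *v v = c *s v \<Longrightarrow> cmod c \<le> lam"
    and vL_pos: "\<And>i. vL $ i > 0" and vR_pos: "\<And>i. vR $ i > 0"
    and vL_eig: "vL v* total_matrix A E l = lam *\<^sub>R vL"
    and vR_eig: "total_matrix A E l *v vR = lam *\<^sub>R vR"
    and norm: "vL \<bullet> vR = 1"
    and \<mu>_space: "sets \<mu> = sets (seq_space A)" and \<mu>_prob: "prob_space \<mu>"
    and \<mu>_cyl: "\<And>ws. set ws \<subseteq> A \<Longrightarrow>
        measure \<mu> (cylinder A ws) = vL \<bullet> (word_matrix E l ws *v vR) / lam ^ length ws"
    and \<mu>I_space: "sets \<mu>I = sets (seq_space A)" and \<mu>I_prob: "prob_space \<mu>I"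
    and \<mu>I_cyl: "\<And>ws. set ws \<subseteq> A \<Longrightarrow>
        measure \<mu>I (cylinder A ws) =
          indicator_vec I \<bullet> (word_matrix E l ws *v vR) / (lam ^ length ws * (indicator_vec I \<bullet> vR))"
  shows "\<forall>t::real. \<exists>P. (partial_prod (\<lambda>n. Wmat A E l lam (t / \<beta> ^ n)) \<longlonglongrightarrow> P) \<and>
           fourier (distr \<mu> borel (phi \<beta>)) t = bilin vL P vR \<and>
           fourier (distr \<mu>I borel (phi \<beta>)) t =
             bilin (indicator_vec I) P vR / complex_of_real (indicator_vec I \<bullet> vR)"
  proof
  fix t :: real
  have \<beta>: "\<beta> > 1" using pis by (simp add: pisot_def)
  obtain P where P: "partial_prod (\<lambda>n. Wmat A E l lam (t / \<beta> ^ n)) \<longlonglongrightarrow> P"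
    using W_conv[OF A_fin lam_pos prim vR_pos vR_eig \<beta>, of t] by (auto simp: convergent_def)
  have cyl1: "\<And>ws. set ws \<subseteq> A \<Longrightarrow>
      measure \<mu> (cylinder A ws) = vL \<bullet> (word_matrix E l ws *v vR) / (lam ^ length ws * 1)"
    using \<mu>_cyl by simp
  have f1: "fourier (distr \<mu> borel (phi \<beta>)) t = bilin vL P vR / complex_of_real 1"
    by (rule fourier_lim[OF A_fin \<mu>_space \<mu>_prob cyl1 \<beta> P])
  have f2: "fourier (distr \<mu>I borel (phi \<beta>)) t = bilin (indicator_vec I) P vR / complex_of_real (indicator_vec I \<bullet> vR)"
    by (rule fourier_lim[OF A_fin \<mu>I_space \<mu>I_prob \<mu>I_cyl \<beta> P])
  show "\<exists>P. (partial_prod (\<lambda>n. Wmat A E l lam (t / \<beta> ^ n)) \<longlonglongrightarrow> P) \<and>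
           fourier (distr \<mu> borel (phi \<beta>)) t = bilin vL P vR \<and>
           fourier (distr \<mu>I borel (phi \<beta>)) t =
             bilin (indicator_vec I) P vR / complex_of_real (indicator_vec I \<bullet> vR)"
    using P f1 f2 by auto
qed

end
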